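(* Let $\gamma<1$, $\gamma\neq 0$. The following two conditions are equivalent. (A) For all $\gamma'\in(\gamma,1)$, $$\lim_{x\uparrow\infty}\frac{u_0'(x)}{x^{\gamma'-1}}=0,$$ and for all $\gamma''<\gamma$, $$\lim_{x\uparrow\infty}\frac{u_0'(x)}{x^{\gamma''-1}}=\infty.$$ (B) $u_0'$ varies regularly at infinity with exponent $\gamma-1$, i.e. for all $k>0$, $$\lim_{x\uparrow\infty}\frac{u_0'(kx)}{u_0'(x)}=k^{\gamma-1}.$$
   Context: Let $\mu$ be a nonzero finite positive Borel measure on $(0,\infty)$ such that $\int y e^{yz}\mu(dy)<\infty$ for every $z\in\mathbb{R}$. Define $h(z,t):=\int e^{yz-\frac12 y^2 t}\mu(dy)$ for $(z,t)\in\mathbb{R}\times[0,\infty)$. Let $u:(0,\infty)\times[0,\infty)\to\mathbb{R}$ be smooth, strictly increasing and strictly concave in $x$, solving $u_t=\frac12 u_x^2/u_{xx}$, and related to $h$ by $u_x(h(z,t),t)=e^{-z+t/2}$ for all $(z,t)$. Write $u_0(x):=u(x,0)$; its derivative $u_0'$ is positive. *)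

theory Defs
  imports "HOL-Analysis.Analysis" "HOL-Probability.Probability"
begin

definition strict_concave_on :: "real set \<Rightarrow> (real \<Rightarrow> real) \<Rightarrow> bool" where
  "strict_concave_on S f \<longleftrightarrow>
     (\<forall>x\<in>S. \<forall>y\<in>S. \<forall>a::real. x \<noteq> y \<and> 0 < a \<and> a < 1 \<longrightarrow>
        f (a * x + (1 - a) * y) > a * f x + (1 - a) * f y)"

text \<open>C-infinity smoothness of a function of two real variables on a set S
  (derivatives taken within S, so boundary points are allowed): there is a family
  D of all iterated partial derivatives, indexed by lists of directions
  (False = first variable, True = second variable), with D [] = f and every
  member Frechet differentiable within S with partials given by the family.\<close>
definition smooth2_on :: "(real \<times> real) set \<Rightarrow> (real \<times> real \<Rightarrow> real) \<Rightarrow> bool" where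
  "smooth2_on S f \<longleftrightarrow>
     (\<exists>D :: bool list \<Rightarrow> real \<times> real \<Rightarrow> real. D [] = f \<and>
        (\<forall>ds. \<forall>p\<in>S. (D ds has_derivative
            (\<lambda>v. fst v * D (False # ds) p + snd v * D (True # ds) p)) (at p within S)))"

definition hfun :: "real measure \<Rightarrow> real \<Rightarrow> real \<Rightarrow> real" where
  "hfun \<mu> z t = (\<integral>y. exp (y * z - y\<^sup>2 * t / 2) \<partial>\<mu>)"

end

theory Submission
  imports Defs "HOL-Real_Asymp.Real_Asymp"
begin


lemma concave_chord:
  fixes G :: "real \<Rightarrow> real"
  assumes conc: "\<And>x y t. 0 \<le> t \<Longrightarrow> t \<le> 1 \<Longrightarrow> t * G x + (1-t) * G y \<le> G (t*x + (1-t)*y)"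
    and pq: "p < q" and qr: "q < r"
  shows "(G r - G q) * (q - p) \<le> (G q - G p) * (r - q)"
proof -
  define t where "t = (r-q)/(r-p)"
  have t0: "0 \<le> t" and t1: "t \<le> 1" using pq qr by (auto simp: t_def field_simps)
  have "t*(r-p) = r-q" using pq qr by (simp add: t_def)
  then have q: "t*p + (1-t)*r = q" by (simp add: algebra_simps)
  have "t * G p + (1-t) * G r \<le> G q" using conc[OF t0 t1, of p r] q by simp
  then have "(r-p) * (t * G p + (1-t) * G r) \<le> (r-p) * G q"
    using pq qr by (intro mult_left_mono) auto
  moreover have "(r-p) * t = r - q" "(r-p) * (1-t) = q - p" using pq qr by (auto simp: t_def field_simps)
  ultimately have "(r-q) * G p + (q-p) * G r \<le> (r-p) * G q"
    by (simp add: distrib_left mult.assoc[symmetric])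
  then show ?thesis by (simp add: algebra_simps)
qed

lemma concave_incr_pos:
  fixes G :: "real \<Rightarrow> real"
  assumes conc: "\<And>x y t. 0 \<le> t \<Longrightarrow> t \<le> 1 \<Longrightarrow> t * G x + (1-t) * G y \<le> G (t*x + (1-t)*y)"
    and lim: "((\<lambda>s. G s / s) \<longlongrightarrow> c) at_top"
    and a: "a > 0"
  shows "((\<lambda>s. G (s+a) - G s) \<longlongrightarrow> c * a) at_top"
proof (rule tendsto_sandwich)
  have f2: "filterlim (\<lambda>s. 2 * (s::real)) at_top at_top" by real_asymp
  have fa: "filterlim (\<lambda>s::real. s+a) at_top at_top" by real_asymp
  have fh: "filterlim (\<lambda>s::real. s/2) at_top at_top" by real_asymp
  have Q2: "((\<lambda>s. G (2* s) / (2* s)) \<longlongrightarrow> c) at_top"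
    using filterlim_compose[OF lim f2] by simp
  have Qa: "((\<lambda>s. G (s+a) / (s+a)) \<longlongrightarrow> c) at_top"
    using filterlim_compose[OF lim fa] by simp
  have Qh: "((\<lambda>s. G (s/2) / (s/2)) \<longlongrightarrow> c) at_top"
    using filterlim_compose[OF lim fh] by simp
  have r1: "((\<lambda>s::real. 2* s/(s-a)) \<longlongrightarrow> 2) at_top" by real_asymp
  have r2: "((\<lambda>s::real. (s+a)/(s-a)) \<longlongrightarrow> 1) at_top" by real_asymp
  have L: "((\<lambda>s. a * ((G (2* s) / (2* s)) * (2* s/(s-a)) - (G (s+a) / (s+a)) * ((s+a)/(s-a)))) \<longlongrightarrow> a * (c*2 - c*1)) at_top"
    by (intro tendsto_intros Q2 Qa r1 r2)
  have U: "((\<lambda>s. a * (2 * (G s / s) - G (s/2) / (s/2))) \<longlongrightarrow> a * (2*c - c)) at_top"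
    by (intro tendsto_intros Qh lim)
  have ev: "eventually (\<lambda>s. s > a) at_top" by (rule eventually_gt_at_top)
  show "((\<lambda>s. a * (G (2* s) - G (s+a)) / (s-a)) \<longlongrightarrow> c * a) at_top"
  proof -
    have "eventually (\<lambda>s. a * ((G (2* s) / (2* s)) * (2* s/(s-a)) - (G (s+a) / (s+a)) * ((s+a)/(s-a))) = a * (G (2* s) - G (s+a)) / (s-a)) at_top"
      using ev proof eventually_elim
      case (elim s)
      then have "s - a \<noteq> 0" "s + a \<noteq> 0" "s \<noteq> 0" using a by auto
      then have e1: "G (s+a) / (s+a) * ((s+a)/(s-a)) = G (s+a) / (s-a)"
        and e2: "G (2 * s) / (2 * s) * (2 * s/(s-a)) = G (2 * s) / (s-a)" by auto
      show ?case unfolding e1 e2 by (metis times_divide_eq_right diff_divide_distrib)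
    qed
    from tendsto_cong[OF this] L show ?thesis by (simp add: algebra_simps)
  qed
  show "((\<lambda>s. a * (G s - G (s/2)) / (s/2)) \<longlongrightarrow> c * a) at_top"
  proof -
    have "eventually (\<lambda>s. a * (2 * (G s / s) - G (s/2) / (s/2)) = a * (G s - G (s/2)) / (s/2)) at_top"
      using ev proof eventually_elim
      case (elim s)
      then have "s - a \<noteq> 0" "s + a \<noteq> 0" "s \<noteq> 0" using a by auto
      then show ?case by (simp add: field_simps)
    qed
    from tendsto_cong[OF this] U show ?thesis by (simp add: algebra_simps)
  qed
  show "eventually (\<lambda>s. a * (G (2* s) - G (s+a)) / (s-a) \<le> G (s+a) - G s) at_top"
    using ev
  proof eventually_elim
    case (elim s)
    have "(G (2* s) - G (s+a)) * ((s+a) - s) \<le> (G (s+a) - G s) * (2* s - (s+a))"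
      by (rule concave_chord[OF conc]) (use elim a in auto)
    then show ?case using elim a by (simp add: field_simps)
  qed
  show "eventually (\<lambda>s. G (s+a) - G s \<le> a * (G s - G (s/2)) / (s/2)) at_top"
    using ev
  proof eventually_elim
    case (elim s)
    have "(G (s+a) - G s) * (s - s/2) \<le> (G s - G (s/2)) * ((s+a) - s)"
      by (rule concave_chord[OF conc]) (use elim a in auto)
    then show ?case using elim a by (simp add: field_simps)
  qed
qed

lemma concave_incr:
  fixes G :: "real \<Rightarrow> real"
  assumes conc: "\<And>x y t. 0 \<le> t \<Longrightarrow> t \<le> 1 \<Longrightarrow> t * G x + (1-t) * G y \<le> G (t*x + (1-t)*y)"
    and lim: "((\<lambda>s. G s / s) \<longlongrightarrow> c) at_top"
  shows "((\<lambda>s. G (s+a) - G s) \<longlongrightarrow> c * a) at_top"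
proof (cases a "0::real" rule: linorder_cases)
  case less
  have fa: "filterlim (\<lambda>s::real. s+a) at_top at_top" by real_asymp
  have "((\<lambda>s. G (s+(-a)) - G s) \<longlongrightarrow> c * (-a)) at_top"
    using concave_incr_pos[OF conc lim, of "-a"] less by simp
  from tendsto_minus[OF filterlim_compose[OF this fa]] show ?thesis by (simp add: algebra_simps)
next
  case equal then show ?thesis by simp
next
  case greater then show ?thesis using concave_incr_pos[OF conc lim] by simp
qed


lemma floor_split:
  fixes s S :: real
  assumes "S \<le> s"
  obtains n :: nat where "S \<le> s - real n" "s - real n < S + 1" "real n \<le> s - S" "s - S - 1 < real n"
proof -
  define n where "n = nat \<lfloor>s - S\<rfloor>"
  have "real n = of_int \<lfloor>s - S\<rfloor>" using assms by (simp add: n_def)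
  moreover have "of_int \<lfloor>s - S\<rfloor> \<le> s - S" "s - S < of_int \<lfloor>s - S\<rfloor> + 1"
    by linarith+
  ultimately show ?thesis using that[of n] by linarith
qed

lemma mono_cesaro:
  fixes G :: "real \<Rightarrow> real"
  assumes mono: "mono G" and lim: "((\<lambda>s. G (s+1) - G s) \<longlongrightarrow> c) at_top" and c: "c > 0"
  shows "((\<lambda>s. G s / s) \<longlongrightarrow> c) at_top"
proof (rule order_tendstoI)
  fix b assume b: "c < b"
  define e where "e = (b + c) / 2"
  have e: "c < e" "e < b" "0 < e" using b c by (auto simp: e_def)
  from order_tendstoD(2)[OF lim e(1)] obtain S where S: "\<And>s. s \<ge> S \<Longrightarrow> G (s+1) - G s < e"
    by (auto simp: eventually_at_top_linorder)
  have ind: "G (t + real n) \<le> G t + real n * e" if "t \<ge> S" for n t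
  proof (induction n)
    case 0 then show ?case by simp
  next
    case (Suc n)
    have "G (t + real (Suc n)) = G ((t + real n) + 1)" by (simp add: algebra_simps)
    also have "\<dots> < G (t + real n) + e" using S[of "t + real n"] that by simp
    finally show ?case using Suc by (simp add: algebra_simps)
  qed
  define K where "K = \<bar>G (S+1)\<bar> + \<bar>S\<bar> * e"
  have "eventually (\<lambda>s. s > max (max S 1) (K / (b - e))) at_top" by (rule eventually_gt_at_top)
  then show "eventually (\<lambda>s. G s / s < b) at_top"
  proof eventually_elim
    case (elim s)
    then have sS: "S \<le> s" and s1: "s > 1" and sK: "s > K / (b - e)" by auto
    obtain n :: nat where n: "S \<le> s - real n" "s - real n < S + 1" "real n \<le> s - S" "s - S - 1 < real n"
      using floor_split[OF sS] by blast
    have "G s = G ((s - real n) + real n)" by simp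
    also have "\<dots> \<le> G (s - real n) + real n * e" by (rule ind[OF n(1)])
    also have "\<dots> \<le> G (S+1) + (s - S) * e"
    proof -
      have "G (s - real n) \<le> G (S+1)" using n by (intro monoD[OF mono]) auto
      moreover have "real n * e \<le> (s - S) * e" using n e by (intro mult_right_mono) auto
      ultimately show ?thesis by linarith
    qed
    also have "\<dots> < b * s"
    proof -
      have "K < (b - e) * s" using sK e by (simp add: field_simps)
      moreover have "G (S+1) - S * e \<le> K"
      proof -
        have "(-S) * e \<le> \<bar>S\<bar> * e" by (rule mult_right_mono) (use e in auto)
        then show ?thesis unfolding K_def using abs_ge_self[of "G (S+1)"] by linarith
      qed
      ultimately show ?thesis by (simp add: algebra_simps)
    qed
    finally show ?case using s1 by (simp add: field_simps)
  qed
next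
  fix a assume a: "a < c"
  define e where "e = max ((a + c) / 2) (c / 2)"
  have e: "e < c" "a < e" "0 < e" using a c unfolding e_def by (auto simp: max_def)
  from order_tendstoD(1)[OF lim e(1)] obtain S where S: "\<And>s. s \<ge> S \<Longrightarrow> e < G (s+1) - G s"
    by (auto simp: eventually_at_top_linorder)
  have ind: "G t + real n * e \<le> G (t + real n)" if "t \<ge> S" for n t
  proof (induction n)
    case 0 then show ?case by simp
  next
    case (Suc n)
    have "G (t + real n) + e < G ((t + real n) + 1)" using S[of "t + real n"] that by simp
    also have "\<dots> = G (t + real (Suc n))" by (simp add: algebra_simps)
    finally show ?case using Suc by (simp add: algebra_simps)
  qed
  define K where "K = \<bar>G S\<bar> + \<bar>S + 1\<bar> * e"
  have "eventually (\<lambda>s. s > max (max S 1) (K / (e - a))) at_top" by (rule eventually_gt_at_top)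
  then show "eventually (\<lambda>s. a < G s / s) at_top"
  proof eventually_elim
    case (elim s)
    then have sS: "S \<le> s" and s1: "s > 1" and sK: "s > K / (e - a)" by auto
    obtain n :: nat where n: "S \<le> s - real n" "s - real n < S + 1" "real n \<le> s - S" "s - S - 1 < real n"
      using floor_split[OF sS] by blast
    have "a * s < G S + (s - S - 1) * e"
    proof -
      have "K < (e - a) * s" using sK e by (simp add: field_simps)
      moreover have "- (G S - (S + 1) * e) \<le> K"
      proof -
        have "(S+1) * e \<le> \<bar>S+1\<bar> * e" by (rule mult_right_mono) (use e in auto)
        then show ?thesis unfolding K_def using abs_ge_self[of "- G S"] by linarith
      qed
      ultimately show ?thesis by (simp add: algebra_simps)
    qed
    also have "\<dots> \<le> G (s - real n) + real n * e"
    proof -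
      have "G S \<le> G (s - real n)" using n by (intro monoD[OF mono]) auto
      moreover have "(s - S - 1) * e \<le> real n * e" using n e by (intro mult_right_mono) auto
      ultimately show ?thesis by linarith
    qed
    also have "\<dots> \<le> G ((s - real n) + real n)" by (rule ind[OF n(1)])
    also have "\<dots> = G s" by simp
    finally show ?case using s1 by (simp add: field_simps)
  qed
qed


lemma condA_id:
  fixes f :: "real \<Rightarrow> real"
  assumes "x > 0" "f x > 0"
  shows "f x / x powr (p-1) = exp ((1-p) * ln x - (- ln (f (exp (ln x)))))"
proof -
  have "exp ((1-p) * ln x - (- ln (f (exp (ln x))))) = exp ((1-p) * ln x) * f x"
    using assms by (simp add: exp_add)
  also have "\<dots> = f x / x powr (p-1)" using assms
    by (simp add: powr_def exp_minus[symmetric] divide_inverse algebra_simps exp_diff)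
  finally show ?thesis by simp
qed

lemma condA_iff:
  fixes f :: "real \<Rightarrow> real" and \<gamma> :: real
  assumes pos: "\<And>x. x > 0 \<Longrightarrow> f x > 0" and gam: "\<gamma> < 1"
  shows "((\<forall>\<gamma>'. \<gamma> < \<gamma>' \<and> \<gamma>' < 1 \<longrightarrow> ((\<lambda>x. f x / x powr (\<gamma>' - 1)) \<longlongrightarrow> 0) at_top) \<and>
          (\<forall>\<gamma>''. \<gamma>'' < \<gamma> \<longrightarrow> filterlim (\<lambda>x. f x / x powr (\<gamma>'' - 1)) at_top at_top))
     \<longleftrightarrow> ((\<lambda>s. (- ln (f (exp s))) / s) \<longlongrightarrow> 1 - \<gamma>) at_top"
  (is "?A \<longleftrightarrow> ?C")
proof -
  define G where "G = (\<lambda>s. - ln (f (exp s)))"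
  define c where "c = 1 - \<gamma>"
  have c: "c > 0" using gam by (simp add: c_def)
  have id: "f x / x powr (p-1) = exp ((1-p) * ln x - G (ln x))" if "x > 0" for x p
    unfolding G_def using condA_id[of x f p, OF that pos[OF that]] by simp
  have ids: "f (exp s) / (exp s) powr (p-1) = exp ((1-p) * s - G s)" for s p
    using id[of "exp s" p] by simp
  have "?A \<longleftrightarrow> ((\<lambda>s. G s / s) \<longlongrightarrow> c) at_top"
  proof
    assume A: ?A
    show "((\<lambda>s. G s / s) \<longlongrightarrow> c) at_top"
    proof (rule order_tendstoI)
      fix b assume b: "c < b"
      define q where "q = (b + c) / 2"
      have q: "c < q" "q < b" using b by (auto simp: q_def)
      have "1 - q < \<gamma>" using q by (simp add: c_def)
      then have "filterlim (\<lambda>x. f x / x powr ((1 - q) - 1)) at_top at_top"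
        using A by blast
      from filterlim_compose[OF this exp_at_top]
      have "filterlim (\<lambda>s. exp (q * s - G s)) at_top at_top" using ids[of _ "1-q"] by simp
      then have "eventually (\<lambda>s. 1 \<le> exp (q * s - G s)) at_top"
        unfolding filterlim_at_top by (rule spec)
      moreover have "eventually (\<lambda>s::real. s > 0) at_top" using eventually_gt_at_top[of "0::real"] by simp
      ultimately show "eventually (\<lambda>s. G s / s < b) at_top"
      proof eventually_elim
        case (elim s)
        then have "G s \<le> q * s" by (simp add: one_le_exp_iff)
        also have "\<dots> < b * s" using q elim by simp
        finally show ?case using elim by (simp add: field_simps)
      qed
    next
      fix a assume a: "a < c"
      define q where "q = max ((a + c) / 2) (c / 2)"
      have q: "q < c" "a < q" "0 < q" using a c unfolding q_def by (auto simp: max_def)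
      have "\<gamma> < 1 - q" "1 - q < 1" using q by (auto simp: c_def)
      then have "((\<lambda>x. f x / x powr ((1 - q) - 1)) \<longlongrightarrow> 0) at_top"
        using A by blast
      from filterlim_compose[OF this exp_at_top]
      have "((\<lambda>s. exp (q * s - G s)) \<longlongrightarrow> 0) at_top" using ids[of _ "1-q"] by simp
      then have "eventually (\<lambda>s. exp (q * s - G s) < 1) at_top"
        by (rule order_tendstoD(2)) simp
      moreover have "eventually (\<lambda>s::real. s > 0) at_top" using eventually_gt_at_top[of "0::real"] by simp
      ultimately show "eventually (\<lambda>s. a < G s / s) at_top"
      proof eventually_elim
        case (elim s)
        then have "q * s < G s" by simp
        moreover have "a * s < q * s" using q elim by simp
        ultimately have "a * s < G s" by linarith
        then show ?case using elim by (simp add: field_simps)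
      qed
    qed
  next
    assume C: "((\<lambda>s. G s / s) \<longlongrightarrow> c) at_top"
    have key: "((\<lambda>s. (q - G s / s) * s) \<longlongrightarrow> 0) at_top \<or> True" for q by simp
    have ev: "eventually (\<lambda>s. (q - G s / s) * s = q * s - G s) at_top" for q
      using eventually_gt_at_top[of 0] by eventually_elim (simp add: field_simps)
    have evx: "eventually (\<lambda>x. exp ((1-p) * ln x - G (ln x)) = f x / x powr (p-1)) at_top" for p
      using eventually_gt_at_top[of 0] by eventually_elim (simp add: id)
    show ?A
    proof safe
      fix g assume g: "\<gamma> < g" "g < 1"
      have "filterlim (\<lambda>s. (1 - g - G s / s) * s) at_bot at_top"
        by (rule filterlim_tendsto_neg_mult_at_bot[OF tendsto_diff[OF tendsto_const C]])
           (use g in \<open>auto simp: c_def filterlim_ident\<close>)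
      then have "filterlim (\<lambda>s. (1 - g) * s - G s) at_bot at_top"
        using filterlim_cong[OF refl refl ev[of "1-g"]] by simp
      from filterlim_compose[OF exp_at_bot this]
      have "((\<lambda>s. exp ((1 - g) * s - G s)) \<longlongrightarrow> 0) at_top" .
      from filterlim_compose[OF this ln_at_top]
      have "((\<lambda>x. exp ((1 - g) * ln x - G (ln x))) \<longlongrightarrow> 0) at_top" .
      then show "((\<lambda>x. f x / x powr (g - 1)) \<longlongrightarrow> 0) at_top"
        using tendsto_cong[OF evx[of g]] by simp
    next
      fix g assume g: "g < \<gamma>"
      have "filterlim (\<lambda>s. (1 - g - G s / s) * s) at_top at_top"
        by (rule filterlim_tendsto_pos_mult_at_top[OF tendsto_diff[OF tendsto_const C]])
           (use g in \<open>auto simp: c_def filterlim_ident\<close>)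
      then have "filterlim (\<lambda>s. (1 - g) * s - G s) at_top at_top"
        using filterlim_cong[OF refl refl ev[of "1-g"]] by simp
      from filterlim_compose[OF exp_at_top this]
      have "filterlim (\<lambda>s. exp ((1 - g) * s - G s)) at_top at_top" .
      from filterlim_compose[OF this ln_at_top]
      have "filterlim (\<lambda>x. exp ((1 - g) * ln x - G (ln x))) at_top at_top" .
      then show "filterlim (\<lambda>x. f x / x powr (g - 1)) at_top at_top"
        using filterlim_cong[OF refl refl evx[of g]] by simp
    qed
  qed
  then show ?thesis by (simp add: G_def c_def)
qed


lemma condB_iff:
  fixes f :: "real \<Rightarrow> real" and \<gamma> :: real
  assumes pos: "\<And>x. x > 0 \<Longrightarrow> f x > 0"
    and mono: "mono (\<lambda>s. - ln (f (exp s)))"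
    and conc: "\<And>x y t. 0 \<le> t \<Longrightarrow> t \<le> 1 \<Longrightarrow>
       t * (- ln (f (exp x))) + (1-t) * (- ln (f (exp y))) \<le> - ln (f (exp (t*x + (1-t)*y)))"
    and gam: "\<gamma> < 1"
  shows "(\<forall>k>0. ((\<lambda>x. f (k * x) / f x) \<longlongrightarrow> k powr (\<gamma> - 1)) at_top)
     \<longleftrightarrow> ((\<lambda>s. (- ln (f (exp s))) / s) \<longlongrightarrow> 1 - \<gamma>) at_top"
proof -
  define G where "G = (\<lambda>s. - ln (f (exp s)))"
  define c where "c = 1 - \<gamma>"
  have c: "c > 0" using gam by (simp add: c_def)
  have concG: "\<And>x y t. 0 \<le> t \<Longrightarrow> t \<le> 1 \<Longrightarrow> t * G x + (1-t) * G y \<le> G (t*x + (1-t)*y)"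
    unfolding G_def by (rule conc)
  have id: "f (k * x) / f x = exp (- (G (ln x + ln k) - G (ln x)))" if "x > 0" "k > 0" for x k
  proof -
    have "exp (ln x + ln k) = k * x" using that by (simp add: exp_add)
    then have "exp (- (G (ln x + ln k) - G (ln x))) = exp (ln (f (k * x)) - ln (f x))"
      unfolding G_def using that by simp
    also have "\<dots> = f (k * x) / f x" using that pos[of x] pos[of "k*x"] by (simp add: exp_diff)
    finally show ?thesis by simp
  qed
  have "(\<forall>k>0. ((\<lambda>x. f (k * x) / f x) \<longlongrightarrow> k powr (\<gamma> - 1)) at_top) \<longleftrightarrow> ((\<lambda>s. G s / s) \<longlongrightarrow> c) at_top"
  proof
    assume C: "((\<lambda>s. G s / s) \<longlongrightarrow> c) at_top"
    show "\<forall>k>0. ((\<lambda>x. f (k * x) / f x) \<longlongrightarrow> k powr (\<gamma> - 1)) at_top"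
    proof safe
      fix k :: real assume k: "k > 0"
      have "((\<lambda>s. G (s + ln k) - G s) \<longlongrightarrow> c * ln k) at_top"
        by (rule concave_incr[OF concG C])
      from filterlim_compose[OF this ln_at_top]
      have "((\<lambda>x. G (ln x + ln k) - G (ln x)) \<longlongrightarrow> c * ln k) at_top" .
      then have "((\<lambda>x. exp (- (G (ln x + ln k) - G (ln x)))) \<longlongrightarrow> exp (- (c * ln k))) at_top"
        by (intro tendsto_intros)
      moreover have "exp (- (c * ln k)) = k powr (\<gamma> - 1)" using k by (simp add: powr_def c_def algebra_simps)
      moreover have "eventually (\<lambda>x. exp (- (G (ln x + ln k) - G (ln x))) = f (k * x) / f x) at_top"
        using eventually_gt_at_top[of "0::real"] by eventually_elim (use k in \<open>simp add: id\<close>)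
      ultimately show "((\<lambda>x. f (k * x) / f x) \<longlongrightarrow> k powr (\<gamma> - 1)) at_top"
        using tendsto_cong by fastforce
    qed
  next
    assume B: "\<forall>k>0. ((\<lambda>x. f (k * x) / f x) \<longlongrightarrow> k powr (\<gamma> - 1)) at_top"
    then have "((\<lambda>x. f (exp 1 * x) / f x) \<longlongrightarrow> exp 1 powr (\<gamma> - 1)) at_top" by simp
    from filterlim_compose[OF this exp_at_top]
    have "((\<lambda>s. f (exp 1 * exp s) / f (exp s)) \<longlongrightarrow> exp (\<gamma> - 1)) at_top" by (simp add: powr_def)
    moreover have "f (exp 1 * exp s) / f (exp s) = exp (- (G (s + 1) - G s))" for s
      using id[of "exp s" "exp 1"] by simp
    ultimately have "((\<lambda>s. exp (- (G (s + 1) - G s))) \<longlongrightarrow> exp (\<gamma> - 1)) at_top" by simp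
    from tendsto_ln[OF this] have "((\<lambda>s. ln (exp (- (G (s + 1) - G s)))) \<longlongrightarrow> ln (exp (\<gamma> - 1))) at_top"
      by simp
    then have "((\<lambda>s. - (G (s + 1) - G s)) \<longlongrightarrow> - c) at_top" by (simp add: c_def)
    from tendsto_minus[OF this] have "((\<lambda>s. G (s + 1) - G s) \<longlongrightarrow> c) at_top" by simp
    then show "((\<lambda>s. G s / s) \<longlongrightarrow> c) at_top"
      by (rule mono_cesaro[OF mono[folded G_def] _ c])
  qed
  then show ?thesis by (simp add: G_def c_def)
qed

theorem lemma5:
  fixes \<mu> :: "real measure"
    and u ux uxx ut :: "real \<Rightarrow> real \<Rightarrow> real"
    and \<gamma> :: real
  assumes mu_borel: "sets \<mu> = sets borel"
    and mu_finite: "finite_measure \<mu>"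
    and mu_support: "emeasure \<mu> {..0} = 0"
    and mu_nonzero: "emeasure \<mu> UNIV \<noteq> 0"
    and mu_int: "\<forall>z. integrable \<mu> (\<lambda>y. y * exp (y * z))"
    and u_smooth: "smooth2_on ({0<..} \<times> {0..}) (\<lambda>(x, t). u x t)"
    and u_x: "\<forall>x>0. \<forall>t\<ge>0. ((\<lambda>x'. u x' t) has_real_derivative ux x t) (at x)"
    and u_xx: "\<forall>x>0. \<forall>t\<ge>0. ((\<lambda>x'. ux x' t) has_real_derivative uxx x t) (at x)"
    and u_t: "\<forall>x>0. \<forall>t\<ge>0. ((\<lambda>t'. u x t') has_real_derivative ut x t) (at t within {0..})"
    and u_incr: "\<forall>t\<ge>0. strict_mono_on {0<..} (\<lambda>x. u x t)"
    and u_conc: "\<forall>t\<ge>0. strict_concave_on {0<..} (\<lambda>x. u x t)"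
    and u_pde: "\<forall>x>0. \<forall>t\<ge>0. ut x t = (1/2) * (ux x t)\<^sup>2 / uxx x t"
    and u_h: "\<forall>z. \<forall>t\<ge>0. ux (hfun \<mu> z t) t = exp (- z + t / 2)"
    and gamma: "\<gamma> < 1" "\<gamma> \<noteq> 0"
  shows "((\<forall>\<gamma>'. \<gamma> < \<gamma>' \<and> \<gamma>' < 1 \<longrightarrow>
              ((\<lambda>x. ux x 0 / x powr (\<gamma>' - 1)) \<longlongrightarrow> 0) at_top) \<and>
          (\<forall>\<gamma>''. \<gamma>'' < \<gamma> \<longrightarrow>
              filterlim (\<lambda>x. ux x 0 / x powr (\<gamma>'' - 1)) at_top at_top))
     \<longleftrightarrow>
         (\<forall>k>0. ((\<lambda>x. ux (k * x) 0 / ux x 0) \<longlongrightarrow> k powr (\<gamma> - 1)) at_top)"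
proof -
  define f where "f = (\<lambda>x. ux x 0)"
  define U where "U = (\<lambda>x. u x 0)"
  have dU: "(U has_real_derivative f x) (at x)" if "x > 0" for x
    using u_x that unfolding U_def f_def by auto
  have Umono: "U x < U y" if "0 < x" "x < y" for x y
    using u_incr that unfolding U_def strict_mono_on_def by auto
  have Uconc: "a * U x + (1 - a) * U y < U (a * x + (1 - a) * y)"
    if "0 < x" "0 < y" "x \<noteq> y" "0 < a" "a < 1" for x y a
    using u_conc that unfolding U_def strict_concave_on_def by auto
  have cvx: "convex_on {0<..} (\<lambda>x. - U x)"
  proof (rule convex_on_linorderI)
    fix t x y :: real assume "t > 0" "t < 1" "x \<in> {0<..}" "y \<in> {0<..}" "x < y"
    then have "(1 - t) * U x + (1 - (1 - t)) * U y < U ((1 - t) * x + (1 - (1 - t)) * y)"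
      by (intro Uconc) auto
    then show "- U ((1 - t) *\<^sub>R x + t *\<^sub>R y) \<le> (1 - t) * - U x + t * - U y" by simp
  qed (simp add: convex_real_interval)
  have tang: "U y - U x \<le> f x * (y - x)" if "0 < x" "0 < y" for x y
  proof -
    have "(- U y) - (- U x) \<ge> (- f x) * (y - x)"
      by (rule convex_on_imp_above_tangent[OF cvx])
         (use that dU[OF that(1)] in \<open>auto intro!: derivative_eq_intros simp: interior_open has_field_derivative_at_within\<close>)
    then show ?thesis by simp
  qed
  have fpos: "f x > 0" if "x > 0" for x
  proof -
    have "0 < U (x+1) - U x" using Umono[of x "x+1"] that by simp
    also have "\<dots> \<le> f x" using tang[of x "x+1"] that by simp
    finally show ?thesis .
  qed
  have fdec: "f y < f x" if "0 < x" "x < y" for x y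
  proof -
    define m where "m = (x + y) / 2"
    have m: "x < m" "m < y" "m - x = y - m" using that by (auto simp: m_def field_simps)
    have "(1/2) * U x + (1 - 1/2) * U y < U ((1/2) * x + (1 - 1/2) * y)"
      using that by (intro Uconc) auto
    moreover have "(1/2) * x + (1 - 1/2) * y = m" by (simp add: m_def field_simps)
    ultimately have c: "U y - U m < U m - U x" by simp
    have "f y * (y - m) \<le> U y - U m" using tang[of y m] that m by (simp add: algebra_simps)
    also have "\<dots> < U m - U x" by (rule c)
    also have "\<dots> \<le> f x * (m - x)" using tang[of x m] that m(1) by simp
    finally have "f y * (m - x) < f x * (m - x)" using m by simp
    then show ?thesis using m by simp
  qed
  have spc: "space \<mu> = UNIV" using sets_eq_imp_space_eq[OF mu_borel] by simp
  interpret fm: finite_measure \<mu> by (rule mu_finite)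
  have AEpos: "AE y in \<mu>. 0 < y"
  proof (rule AE_I'[of "{..0}"])
    show "{..0::real} \<in> null_sets \<mu>" using mu_support mu_borel by (simp add: null_sets_def)
    show "{y \<in> space \<mu>. \<not> 0 < y} \<subseteq> {..0}" by auto
  qed
  have meas: "(\<lambda>y. exp (y * z)) \<in> borel_measurable \<mu>" for z
    unfolding measurable_cong_sets[OF mu_borel refl] by measurable
  have int: "integrable \<mu> (\<lambda>y. exp (y * z))" for z
  proof (rule Bochner_Integration.integrable_bound[OF Bochner_Integration.integrable_add[OF mu_int[rule_format, of z] fm.integrable_const[of "exp \<bar>z\<bar>"]] meas])
    show "AE y in \<mu>. norm (exp (y * z)) \<le> norm (y * exp (y * z) + exp \<bar>z\<bar>)"
      using AEpos
    proof eventually_elim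
      case (elim y)
      have "exp (y * z) \<le> y * exp (y * z) + exp \<bar>z\<bar>"
      proof (cases "y \<ge> 1")
        case True
        then have "exp (y * z) \<le> y * exp (y * z)" by simp
        then show ?thesis using exp_gt_zero[of "\<bar>z\<bar>"] by linarith
      next
        case False
        have "y * z \<le> y * \<bar>z\<bar>" using elim by (intro mult_left_mono) auto
        also have "\<dots> \<le> \<bar>z\<bar>" using elim False by (intro mult_left_le_one_le) auto
        finally have "y * z \<le> \<bar>z\<bar>" .
        then have "exp (y * z) \<le> exp \<bar>z\<bar>" by simp
        moreover have "0 \<le> y * exp (y * z)" using elim by simp
        ultimately show ?thesis by linarith
      qed
      moreover have "0 \<le> y * exp (y * z) + exp \<bar>z\<bar>" using elim by (simp add: add_nonneg_nonneg)
      ultimately show ?case by simp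
    qed
  qed
  define g where "g = (\<lambda>z. integral\<^sup>L \<mu> (\<lambda>y. exp (y * z)))"
  have gpos: "g z > 0" for z
  proof -
    have nn: "AE y in \<mu>. 0 \<le> exp (y * z)" by simp
    have "g z \<ge> 0" unfolding g_def by (rule integral_nonneg_AE[OF nn])
    moreover have "g z \<noteq> 0"
    proof
      assume "g z = 0"
      then have "AE y in \<mu>. exp (y * z) = 0"
        using integral_nonneg_eq_0_iff_AE[OF int nn] unfolding g_def by simp
      then have "AE y in \<mu>. False" by simp
      then have "ae_filter \<mu> = bot" using trivial_limit_def by blast
      then show False using mu_nonzero spc by (simp add: ae_filter_eq_bot_iff)
    qed
    ultimately show ?thesis by simp
  qed
  have fg: "f (g z) = exp (- z)" for z
  proof -
    have "ux (hfun \<mu> z 0) 0 = exp (- z + 0 / 2)" using u_h by blast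
    then show ?thesis unfolding f_def g_def hfun_def by simp
  qed
  have logcvx: "ln (g (t * a + (1 - t) * b)) \<le> t * ln (g a) + (1 - t) * ln (g b)"
    if t: "0 \<le> t" "t \<le> 1" for a b t
  proof -
    define A where "A = g a"
    define B where "B = g b"
    have A: "A > 0" and B: "B > 0" using gpos by (auto simp: A_def B_def)
    define K where "K = exp (t * ln A + (1 - t) * ln B)"
    have K: "K > 0" by (simp add: K_def)
    have pw: "exp (y * (t * a + (1 - t) * b)) \<le> (K * t / A) * exp (y * a) + (K * (1 - t) / B) * exp (y * b)" for y
    proof -
      define v1 where "v1 = y * a - ln A"
      define v2 where "v2 = y * b - ln B"
      have "exp ((1 - (1 - t)) *\<^sub>R v1 + (1 - t) *\<^sub>R v2) \<le> (1 - (1 - t)) * exp v1 + (1 - t) * exp v2"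
        using convex_onD[OF exp_convex, of "1 - t" v1 v2] t by simp
      then have "exp (t * v1 + (1 - t) * v2) \<le> t * exp v1 + (1 - t) * exp v2" by simp
      then have "K * exp (t * v1 + (1 - t) * v2) \<le> K * (t * exp v1 + (1 - t) * exp v2)"
        using K by simp
      moreover have "K * exp (t * v1 + (1 - t) * v2) = exp (y * (t * a + (1 - t) * b))"
        unfolding K_def v1_def v2_def by (simp add: exp_add[symmetric] algebra_simps)
      moreover have "exp v1 = exp (y * a) / A" "exp v2 = exp (y * b) / B"
        using A B by (simp_all add: v1_def v2_def exp_diff)
      ultimately show ?thesis by (simp add: algebra_simps)
    qed
    have "g (t * a + (1 - t) * b) \<le> integral\<^sup>L \<mu> (\<lambda>y. (K * t / A) * exp (y * a) + (K * (1 - t) / B) * exp (y * b))"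
      unfolding g_def by (rule integral_mono[OF int]) (use int pw in auto)
    also have "\<dots> = (K * t / A) * A + (K * (1 - t) / B) * B"
      using int by (simp add: A_def B_def g_def)
    also have "\<dots> = K" using A B by (simp add: field_simps)
    finally have "g (t * a + (1 - t) * b) \<le> K" .
    then have "ln (g (t * a + (1 - t) * b)) \<le> ln K" using gpos[of "t * a + (1 - t) * b"] K by simp
    then show ?thesis by (simp add: K_def A_def B_def)
  qed
  define H where "H = (\<lambda>z. ln (g z))"
  define G where "G = (\<lambda>s. - ln (f (exp s)))"
  have GH: "G (H z) = z" for z
    using gpos[of z] fg[of z] by (simp add: G_def H_def)
  have surj: "\<exists>z. H z = s" for s
  proof -
    define z where "z = - ln (f (exp s))"
    have "f (g z) = f (exp s)" using fg[of z] fpos[of "exp s"] by (simp add: z_def)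
    moreover have "g z > 0" "exp s > 0" using gpos by auto
    ultimately have "g z = exp s" using fdec by (metis linorder_neqE_linordered_idom less_irrefl)
    then show ?thesis by (intro exI[of _ z]) (simp add: H_def)
  qed
  have Gmono: "mono (\<lambda>s. - ln (f (exp s)))"
  proof (rule monoI)
    fix s1 s2 :: real assume "s1 \<le> s2"
    then have "f (exp s2) \<le> f (exp s1)"
      using fdec[of "exp s1" "exp s2"] by (cases "s1 = s2") auto
    then show "- ln (f (exp s1)) \<le> - ln (f (exp s2))" using fpos[of "exp s1"] fpos[of "exp s2"] by simp
  qed
  have Gconc: "t * (- ln (f (exp x))) + (1-t) * (- ln (f (exp y))) \<le> - ln (f (exp (t*x + (1-t)*y)))"
    if "0 \<le> t" "t \<le> 1" for x y t
  proof -
    obtain z1 where z1: "H z1 = x" using surj by blast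
    obtain z2 where z2: "H z2 = y" using surj by blast
    have "H (t * z1 + (1 - t) * z2) \<le> t * x + (1 - t) * y"
      using logcvx[OF that, of z1 z2] z1 z2 by (simp add: H_def)
    then have "G (H (t * z1 + (1 - t) * z2)) \<le> G (t * x + (1 - t) * y)"
      using monoD[OF Gmono] unfolding G_def by blast
    then have "t * z1 + (1 - t) * z2 \<le> G (t * x + (1 - t) * y)" by (simp add: GH)
    moreover have "G x = z1" "G y = z2" using GH z1 z2 by auto
    ultimately show ?thesis by (simp add: G_def)
  qed
  have A: "((\<forall>\<gamma>'. \<gamma> < \<gamma>' \<and> \<gamma>' < 1 \<longrightarrow> ((\<lambda>x. f x / x powr (\<gamma>' - 1)) \<longlongrightarrow> 0) at_top) \<and>
          (\<forall>\<gamma>''. \<gamma>'' < \<gamma> \<longrightarrow> filterlim (\<lambda>x. f x / x powr (\<gamma>'' - 1)) at_top at_top))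
     \<longleftrightarrow> ((\<lambda>s. (- ln (f (exp s))) / s) \<longlongrightarrow> 1 - \<gamma>) at_top"
    by (rule condA_iff[OF fpos gamma(1)])
  have B: "(\<forall>k>0. ((\<lambda>x. f (k * x) / f x) \<longlongrightarrow> k powr (\<gamma> - 1)) at_top)
     \<longleftrightarrow> ((\<lambda>s. (- ln (f (exp s))) / s) \<longlongrightarrow> 1 - \<gamma>) at_top"
    by (rule condB_iff[OF fpos Gmono Gconc gamma(1)])
  show ?thesis using A B unfolding f_def by simp
qed

end
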